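(* Let $K$ be a field containing $\mathbb{Q}$ and $n\in\mathbb{N}^+$. Then $\Gamma_n\cong A_n$ as $K$-algebras.
   Context: $\Gamma$ denotes the set of all functions $\mathbb{N}^+\to K$ with pointwise addition and the convolution product $(fg)(m)=\sum_{ab=m}f(a)g(b)$; $\Gamma_n=\{f\in\Gamma: f(m)=0\ \forall m>n\}$ with the truncated product $(fg)(m)=\sum_{ab=m}f(a)g(b)$ for $m\le n$ and $0$ for $m>n$. $X=\{x_1,x_2,\dots\}$, $\mathcal{M}$ is the free commutative monoid on $X$, and $K[[X]]$ is the ring of all functions $\mathcal{M}\to K$. The weight of $x_1^{a_1}\cdots x_k^{a_k}$ is $p_1^{a_1}\cdots p_k^{a_k}$, $p_i$ the $i$-th prime. $I_n\subseteq K[[X]]$ is the set of power series supported on monomials of weight $>n$ (the monomial ideal generated by monomials of weight $>n$), and $A_n=K[[X]]/I_n$. *)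

theory Defs
  imports "HOL-Algebra.QuotRing" "HOL-Library.Multiset" "HOL-Computational_Algebra.Primes" "HOL-Library.Infinite_Set"
begin

(* The i-th prime (0-indexed): p_{i+1} in the paper's notation. *)
definition nth_prime :: "nat \<Rightarrow> nat" where
  "nth_prime i = Infinite_Set.enumerate {p. prime p} i"

(* Monomials of the free commutative monoid on X = {x_1, x_2, ...} are represented as
   multisets of variable indices; index i stands for x_{i+1}. *)
definition weight :: "nat multiset \<Rightarrow> nat" where
  "weight m = (\<Prod>i\<in>#m. nth_prime i)"

definition PS_ring :: "('a::field) itself \<Rightarrow> (nat multiset \<Rightarrow> 'a) ring" where
  "PS_ring _ = \<lparr>carrier = UNIV,
     monoid.mult = (\<lambda>f g m. \<Sum>a\<in>{a. a \<subseteq># m}. f a * g (m - a)),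
     one = (\<lambda>m. if m = {#} then 1 else 0),
     zero = (\<lambda>m. 0),
     add = (\<lambda>f g m. f m + g m)\<rparr>"

definition PS_const :: "'a::field \<Rightarrow> nat multiset \<Rightarrow> 'a" where
  "PS_const c = (\<lambda>m. if m = {#} then c else 0)"

definition I_ideal :: "('a::field) itself \<Rightarrow> nat \<Rightarrow> (nat multiset \<Rightarrow> 'a) set" where
  "I_ideal _ n = {f. \<forall>m. weight m \<le> n \<longrightarrow> f m = 0}"

definition A_ring :: "('a::field) itself \<Rightarrow> nat \<Rightarrow> (nat multiset \<Rightarrow> 'a) set ring" where
  "A_ring T n = PS_ring T Quot I_ideal T n"

(* Gamma_n: functions N^+ -> K vanishing above n (represented on nat, with value 0 at 0),
   truncated Dirichlet convolution. *)
definition Gamma_ring :: "('a::field) itself \<Rightarrow> nat \<Rightarrow> (nat \<Rightarrow> 'a) ring" where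
  "Gamma_ring _ n = \<lparr>carrier = {f. \<forall>m. (m = 0 \<or> m > n) \<longrightarrow> f m = 0},
     monoid.mult = (\<lambda>f g m. if 1 \<le> m \<and> m \<le> n then (\<Sum>a\<in>{a. a dvd m}. f a * g (m div a)) else 0),
     one = (\<lambda>m. if m = 1 \<and> 1 \<le> n then 1 else 0),
     zero = (\<lambda>m. 0),
     add = (\<lambda>f g m. f m + g m)\<rparr>"

(* K-algebra isomorphism Gamma_n -> A_n: a ring isomorphism that is K-linear, where
   K acts on Gamma_n pointwise and on A_n via the class of the constant series c. *)
definition K_alg_iso :: "('a::field) itself \<Rightarrow> nat \<Rightarrow> ((nat \<Rightarrow> 'a) \<Rightarrow> (nat multiset \<Rightarrow> 'a) set) \<Rightarrow> bool" where
  "K_alg_iso T n \<phi> \<longleftrightarrow>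
     \<phi> \<in> ring_iso (Gamma_ring T n) (A_ring T n) \<and>
     (\<forall>c::'a. \<forall>f\<in>carrier (Gamma_ring T n).
        \<phi> (\<lambda>m. c * f m) =
          (I_ideal T n +>\<^bsub>PS_ring T\<^esub> PS_const c) \<otimes>\<^bsub>A_ring T n\<^esub> \<phi> f)"

end

theory Submission
  imports Defs
begin

lemma nth_prime_inj: "inj nth_prime"
  unfolding nth_prime_def
  by (intro strict_mono_imp_inj_on strict_mono_enumerate primes_infinite)

lemma nth_prime_prime: "prime (nth_prime i)"
  unfolding nth_prime_def using enumerate_in_set[OF primes_infinite] by auto

lemma nth_prime_range: "range nth_prime = {p. prime p}"
  unfolding nth_prime_def by (rule range_enumerate[OF primes_infinite])

lemma weight_alt: "weight m = prod_mset (image_mset nth_prime m)"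
  unfolding weight_def by simp

lemma weight_pf: "prime_factorization (weight m) = image_mset nth_prime m"
  unfolding weight_alt
  by (rule prime_factorization_prod_mset_primes) (auto simp: nth_prime_prime)

lemma weight_pos: "weight m \<ge> 1"
proof -
  have "weight m \<noteq> 0" unfolding weight_alt
    using nth_prime_prime by (auto simp: prod_mset_zero_iff) (metis not_prime_0)
  then show ?thesis by simp
qed

lemma weight_inj: "weight a = weight b \<Longrightarrow> a = b"
proof -
  assume "weight a = weight b"
  then have "image_mset nth_prime a = image_mset nth_prime b"
    by (metis weight_pf)
  then show "a = b" using nth_prime_inj
    by (metis image_mset_map_of multiset.inj_map_strong inj_def)
qed

definition wi :: "nat \<Rightarrow> nat multiset" where
  "wi k = image_mset (inv_into UNIV nth_prime) (prime_factorization k)"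

lemma weight_wi: "k \<ge> 1 \<Longrightarrow> weight (wi k) = k"
proof -
  assume k: "k \<ge> 1"
  have "image_mset nth_prime (wi k) = prime_factorization k"
    unfolding wi_def multiset.map_comp
    by (rule multiset.map_ident_strong)
       (metis comp_apply f_inv_into_f in_prime_factors_imp_prime mem_Collect_eq nth_prime_range)
  then show ?thesis unfolding weight_alt using k
    by (simp add: prod_mset_prime_factorization)
qed

lemma wi_weight: "wi (weight m) = m"
  using weight_inj weight_wi weight_pos by metis

lemma weight_add: "weight (a + b) = weight a * weight b"
  unfolding weight_def by simp

lemma weight_diff: "a \<subseteq># m \<Longrightarrow> weight (m - a) = weight m div weight a"
proof -
  assume "a \<subseteq># m"
  then have "m = a + (m - a)" by simp
  then have "weight m = weight a * weight (m - a)" by (metis weight_add)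
  then show ?thesis using weight_pos[of a] by simp
qed

lemma weight_image: "weight ` {a. a \<subseteq># m} = {d. d dvd weight m}"
proof safe
  fix a assume "a \<subseteq># m"
  then have "m = a + (m - a)" by simp
  then show "weight a dvd weight m" by (metis weight_add dvd_triv_left)
next
  fix d assume d: "d dvd weight m"
  have d0: "d \<ge> 1" using d weight_pos[of m]
    by (metis dvd_0_left_iff less_one not_le not_one_le_zero)
  have "prime_factorization d \<subseteq># prime_factorization (weight m)"
    using d weight_pos[of m] d0 by (subst prime_factorization_subset_iff_dvd) auto
  then have "wi d \<subseteq># image_mset (inv_into UNIV nth_prime) (image_mset nth_prime m)"
    unfolding wi_def weight_pf by (rule image_mset_subseteq_mono)
  also have "\<dots> = m" by (simp add: multiset.map_comp nth_prime_inj)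
  finally show "d \<in> weight ` {a. a \<subseteq># m}" using weight_wi[OF d0] by force
qed

lemma weight_le: "a \<subseteq># m \<Longrightarrow> weight a \<le> weight m"
proof -
  assume "a \<subseteq># m"
  then have "weight a dvd weight m" using weight_image by blast
  then show ?thesis using weight_pos[of m] by (simp add: dvd_imp_le)
qed

lemma sum_reindex_weight:
  "(\<Sum>a\<in>{a. a \<subseteq># m}. F (weight a)) = (\<Sum>d\<in>{d. d dvd weight m}. F d)"
proof -
  have "inj_on weight {a. a \<subseteq># m}" by (meson inj_onI weight_inj)
  then show ?thesis using sum.reindex[of weight "{a. a \<subseteq># m}" F] weight_image by simp
qed


definition cls :: "nat \<Rightarrow> (nat multiset \<Rightarrow> 'a::field) \<Rightarrow> (nat multiset \<Rightarrow> 'a) set" where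
  "cls n a = {h. \<forall>m. weight m \<le> n \<longrightarrow> h m = a m}"

definition pmul :: "(nat multiset \<Rightarrow> 'a::field) \<Rightarrow> (nat multiset \<Rightarrow> 'a) \<Rightarrow> nat multiset \<Rightarrow> 'a" where
  "pmul f g = (\<lambda>m. \<Sum>a\<in>{a. a \<subseteq># m}. f a * g (m - a))"

lemma cls_self: "a \<in> cls n a" unfolding cls_def by simp

lemma cls_eq_iff: "cls n a = cls n b \<longleftrightarrow> (\<forall>m. weight m \<le> n \<longrightarrow> a m = b m)"
proof
  assume "cls n a = cls n b"
  then have "a \<in> cls n b" using cls_self by metis
  then show "\<forall>m. weight m \<le> n \<longrightarrow> a m = b m" unfolding cls_def by auto
qed (auto simp: cls_def)

lemma coset_eq: "I_ideal T n +>\<^bsub>PS_ring T\<^esub> a = cls n a"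
proof -
  have "I_ideal T n +>\<^bsub>PS_ring T\<^esub> a = (\<Union>h\<in>I_ideal T n. {(\<lambda>m. h m + a m)})"
    by (simp add: a_r_coset_def r_coset_def PS_ring_def)
  also have "\<dots> = cls n a"
  proof safe
    fix x h assume "h \<in> I_ideal T n"
    then show "(\<lambda>m. h m + a m) \<in> cls n a" by (auto simp: I_ideal_def cls_def)
  next
    fix x assume x: "x \<in> cls n a"
    have "(\<lambda>m. x m - a m) \<in> I_ideal T n" using x by (auto simp: I_ideal_def cls_def)
    moreover have "x = (\<lambda>m. (\<lambda>m. x m - a m) m + a m)" by simp
    ultimately show "x \<in> (\<Union>h\<in>I_ideal T n. {(\<lambda>m. h m + a m)})" by blast
  qed
  finally show ?thesis .
qed

lemma PS_mult: "x \<otimes>\<^bsub>PS_ring T\<^esub> y = pmul x y"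
  by (simp add: PS_ring_def pmul_def)

lemma PS_one: "\<one>\<^bsub>PS_ring T\<^esub> = (\<lambda>m. if m = {#} then 1 else 0)"
  by (simp add: PS_ring_def)

lemma PS_carrier: "carrier (PS_ring T) = UNIV"
  by (simp add: PS_ring_def)

lemma carrier_A: "carrier (A_ring T n) = range (cls n)"
proof -
  have "carrier (A_ring T n) = (\<Union>a\<in>carrier (PS_ring T). {I_ideal T n +>\<^bsub>PS_ring T\<^esub> a})"
    by (simp add: A_ring_def FactRing_def A_RCOSETS_def RCOSETS_def a_r_coset_def)
  then show ?thesis by (auto simp: coset_eq PS_carrier)
qed

lemma add_A: "cls n a \<oplus>\<^bsub>A_ring T n\<^esub> cls n b = cls n (\<lambda>m. a m + b m)"
proof -
  have "cls n a \<oplus>\<^bsub>A_ring T n\<^esub> cls n b = (\<Union>x\<in>cls n a. \<Union>y\<in>cls n b. {(\<lambda>m. x m + y m)})"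
    by (simp add: A_ring_def FactRing_def set_add_def set_mult_def PS_ring_def)
  also have "\<dots> = cls n (\<lambda>m. a m + b m)"
  proof safe
    fix x y assume "x \<in> cls n a" "y \<in> cls n b"
    then show "(\<lambda>m. x m + y m) \<in> cls n (\<lambda>m. a m + b m)" by (auto simp: cls_def)
  next
    fix z assume z: "z \<in> cls n (\<lambda>m. a m + b m)"
    have "(\<lambda>m. z m - b m) \<in> cls n a" using z by (auto simp: cls_def)
    moreover have "z = (\<lambda>m. (\<lambda>m. z m - b m) m + b m)" by simp
    ultimately show "z \<in> (\<Union>x\<in>cls n a. \<Union>y\<in>cls n b. {(\<lambda>m. x m + y m)})"
      using cls_self[of b n] by blast
  qed
  finally show ?thesis .
qed

lemma pmul_cong:
  assumes "x \<in> cls n a" "y \<in> cls n b"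
  shows "cls n (pmul x y) = cls n (pmul a b)"
  unfolding cls_eq_iff
proof safe
  fix m assume m: "weight m \<le> n"
  show "pmul x y m = pmul a b m" unfolding pmul_def
  proof (rule sum.cong)
    fix c assume "c \<in> {c. c \<subseteq># m}"
    then have "c \<subseteq># m" "m - c \<subseteq># m" by auto
    then have "weight c \<le> n" "weight (m - c) \<le> n" using weight_le m by (meson le_trans)+
    then show "x c * y (m - c) = a c * b (m - c)" using assms by (auto simp: cls_def)
  qed simp
qed

lemma mult_A: "cls n a \<otimes>\<^bsub>A_ring T n\<^esub> cls n b = cls n (pmul a b)"
proof -
  have "cls n a \<otimes>\<^bsub>A_ring T n\<^esub> cls n b = (\<Union>x\<in>cls n a. \<Union>y\<in>cls n b. cls n (pmul x y))"
    by (simp add: A_ring_def FactRing_def rcoset_mult_def coset_eq PS_mult)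
  also have "\<dots> = cls n (pmul a b)"
  proof
    show "(\<Union>x\<in>cls n a. \<Union>y\<in>cls n b. cls n (pmul x y)) \<subseteq> cls n (pmul a b)"
      using pmul_cong[of _ n a _ b] by blast
    show "cls n (pmul a b) \<subseteq> (\<Union>x\<in>cls n a. \<Union>y\<in>cls n b. cls n (pmul x y))"
      using cls_self[of a n] cls_self[of b n] by blast
  qed
  finally show ?thesis .
qed

lemma one_A: "\<one>\<^bsub>A_ring T n\<^esub> = cls n (\<lambda>m. if m = {#} then 1 else 0)"
  by (simp add: A_ring_def FactRing_def coset_eq PS_one)


lemma finite_submsets: "finite {a. a \<subseteq># (m::nat multiset)}"
proof -
  have "finite (weight ` {a. a \<subseteq># m})" unfolding weight_image
    using weight_pos[of m] by (simp add: finite_divisors_nat)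
  moreover have "inj_on weight {a. a \<subseteq># m}" by (meson inj_onI weight_inj)
  ultimately show ?thesis by (rule finite_imageD)
qed

lemma pmul_const: "pmul (PS_const c) h m = c * h m"
proof -
  have "pmul (PS_const c) h m = (\<Sum>a\<in>{a. a \<subseteq># m}. if a = {#} then c * h (m - a) else 0)"
    unfolding pmul_def PS_const_def by (intro sum.cong) auto
  also have "\<dots> = c * h m" using finite_submsets[of m] by (simp add: sum.delta')
  finally show ?thesis .
qed

definition psi :: "(nat \<Rightarrow> 'a::field) \<Rightarrow> nat multiset \<Rightarrow> 'a" where
  "psi f = (\<lambda>m. f (weight m))"

lemma Gamma_mult_weight:
  assumes "weight m \<le> n"
  shows "psi (f \<otimes>\<^bsub>Gamma_ring T n\<^esub> g) m = pmul (psi f) (psi g) m"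
proof -
  have "psi (f \<otimes>\<^bsub>Gamma_ring T n\<^esub> g) m = (\<Sum>d\<in>{d. d dvd weight m}. f d * g (weight m div d))"
    using assms weight_pos[of m] by (simp add: psi_def Gamma_ring_def)
  also have "\<dots> = (\<Sum>a\<in>{a. a \<subseteq># m}. f (weight a) * g (weight m div weight a))"
    by (rule sum_reindex_weight[symmetric])
  also have "\<dots> = pmul (psi f) (psi g) m"
    unfolding pmul_def psi_def by (intro sum.cong) (auto simp: weight_diff)
  finally show ?thesis .
qed

lemma weight_eq_1: "weight m = 1 \<longleftrightarrow> m = {#}"
  using weight_inj[of m "{#}"] by (auto simp: weight_def)

lemma weight_eq_Suc0: "weight m = Suc 0 \<longleftrightarrow> m = {#}"
  using weight_eq_1 by simp

lemma weight_empty: "weight {#} = 1"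
  by (simp add: weight_def)

theorem mainTheorem5:
  fixes n :: nat
  assumes "n \<ge> 1"
  shows "\<exists>\<phi>. K_alg_iso TYPE('a::field_char_0) n \<phi>"
proof -
  let ?T = "TYPE('a)"
  define \<phi> where "\<phi> = (\<lambda>f::nat \<Rightarrow> 'a. cls n (psi f))"
  have carrG: "carrier (Gamma_ring ?T n) = {f. \<forall>m. (m = 0 \<or> m > n) \<longrightarrow> f m = 0}"
    by (simp add: Gamma_ring_def)
  have hom: "\<phi> \<in> ring_hom (Gamma_ring ?T n) (A_ring ?T n)"
  proof (rule ring_hom_memI)
    fix x show "\<phi> x \<in> carrier (A_ring ?T n)" by (simp add: carrier_A \<phi>_def)
  next
    fix x y
    show "\<phi> (x \<otimes>\<^bsub>Gamma_ring ?T n\<^esub> y) = \<phi> x \<otimes>\<^bsub>A_ring ?T n\<^esub> \<phi> y"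
      unfolding \<phi>_def mult_A cls_eq_iff using Gamma_mult_weight by blast
  next
    fix x y
    show "\<phi> (x \<oplus>\<^bsub>Gamma_ring ?T n\<^esub> y) = \<phi> x \<oplus>\<^bsub>A_ring ?T n\<^esub> \<phi> y"
      unfolding \<phi>_def add_A by (simp add: Gamma_ring_def psi_def)
  next
    show "\<phi> \<one>\<^bsub>Gamma_ring ?T n\<^esub> = \<one>\<^bsub>A_ring ?T n\<^esub>"
      unfolding \<phi>_def one_A cls_eq_iff using assms
      by (auto simp: Gamma_ring_def psi_def weight_eq_1 weight_eq_Suc0 weight_empty)
  qed
  have inj: "inj_on \<phi> (carrier (Gamma_ring ?T n))"
  proof (rule inj_onI)
    fix f g assume f: "f \<in> carrier (Gamma_ring ?T n)" and g: "g \<in> carrier (Gamma_ring ?T n)"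
      and e: "\<phi> f = \<phi> g"
    have e2: "\<forall>m. weight m \<le> n \<longrightarrow> f (weight m) = g (weight m)"
      using e unfolding \<phi>_def cls_eq_iff psi_def .
    show "f = g"
    proof
      fix k
      show "f k = g k"
      proof (cases "k = 0 \<or> k > n")
        case True then show ?thesis using f g carrG by auto
      next
        case False
        then have "k \<ge> 1" "k \<le> n" by auto
        then show ?thesis using e2[rule_format, of "wi k"] weight_wi by simp
      qed
    qed
  qed
  have surj: "\<phi> ` carrier (Gamma_ring ?T n) = carrier (A_ring ?T n)"
  proof
    show "\<phi> ` carrier (Gamma_ring ?T n) \<subseteq> carrier (A_ring ?T n)"
      by (auto simp: carrier_A \<phi>_def)
    show "carrier (A_ring ?T n) \<subseteq> \<phi> ` carrier (Gamma_ring ?T n)"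
    proof
      fix X assume "X \<in> carrier (A_ring ?T n)"
      then obtain a where X: "X = cls n a" by (auto simp: carrier_A)
      define f where "f = (\<lambda>k. if 1 \<le> k \<and> k \<le> n then a (wi k) else 0)"
      have "f \<in> carrier (Gamma_ring ?T n)" using carrG f_def by auto
      moreover have "X = \<phi> f"
        unfolding X \<phi>_def cls_eq_iff psi_def f_def using weight_pos wi_weight by simp
      ultimately show "X \<in> \<phi> ` carrier (Gamma_ring ?T n)" by blast
    qed
  qed
  have lin: "\<forall>c::'a. \<forall>f\<in>carrier (Gamma_ring ?T n).
        \<phi> (\<lambda>m. c * f m) =
          (I_ideal ?T n +>\<^bsub>PS_ring ?T\<^esub> PS_const c) \<otimes>\<^bsub>A_ring ?T n\<^esub> \<phi> f"
    unfolding coset_eq \<phi>_def mult_A cls_eq_iff by (simp add: pmul_const psi_def)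
  have "K_alg_iso ?T n \<phi>"
    unfolding K_alg_iso_def ring_iso_def using hom inj surj lin by (simp add: bij_betw_def)
  then show ?thesis by blast
qed

end
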